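(* On the trivial homogeneous $\mathrm{U}(1)$-principal bundle $P=V^{5,2}\times\mathrm{U}(1)$ over $V^{5,2}=\mathrm{SO}(5)/\mathrm{SO}(3)$ (induced by the trivial homomorphism $\mathrm{SO}(3)\to\mathrm{U}(1)$), the $\mathrm{SO}(5)$-invariant connections are exactly those corresponding to the linear maps $\beta:\mathfrak{so}(5)\to\mathfrak u(1)$ of the form $\beta=a_1\,e^1\otimes u$, $a_1\in\mathbb{R}$, where $u$ is a fixed generator of $\mathfrak u(1)\cong\mathbb{R}$. Furthermore, the curvature of such a connection lies in $\Omega^2_1$, i.e. is a constant multiple of the invariant 2-form $\omega$ corresponding to $e^{25}+e^{36}+e^{47}$, tensored with $u$.
   Context: Basis of $\mathfrak{so}(5)$ (with $E_{ij}$ the elementary $5\times5$ matrices): $e_1=E_{12}-E_{21}$, $e_2=E_{13}-E_{31}$, $e_3=E_{14}-E_{41}$, $e_4=E_{15}-E_{51}$, $e_5=E_{23}-E_{32}$, $e_6=E_{24}-E_{42}$, $e_7=E_{25}-E_{52}$, $e_8=E_{34}-E_{43}$, $e_9=E_{35}-E_{53}$, $e_{10}=E_{54}-E_{45}$; bracket = commutator. $\mathrm{SO}(3)\subset\mathrm{SO}(5)$ has Lie algebra $\mathrm{span}\{e_8,e_9,e_{10}\}$; $e^i$ dual basis. For a homomorphism $\phi:H\to K$, $G$-invariant connections on $G\times_\phi K\to G/H$ correspond bijectively to linear maps $\alpha:\mathfrak g\to\mathfrak k$ with $\alpha|_{\mathfrak h}=\phi_*$ and $\alpha\circ\mathrm{Ad}(h)=\mathrm{Ad}(\phi(h))\circ\alpha$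 for $h\in H$. The curvature is the invariant form given on $\mathfrak m=\mathrm{span}\{e_1,\dots,e_7\}$ by $F(X,Y)=[\alpha X,\alpha Y]-\alpha([X,Y])$. $\Omega^2_1$ denotes 2-forms $f\,\omega$ with $\omega=e^{25}+e^{36}+e^{47}$. *)

theory Defs
  imports "HOL-Analysis.Analysis"
begin

text \<open>Matrix indices 1..5 of the paper are mapped to the elements 0..4 of the numeral type 5.\<close>

definition idx :: "nat \<Rightarrow> 5" where
  "idx k = of_nat (k - 1)"

definition Emat :: "nat \<Rightarrow> nat \<Rightarrow> real^5^5" where
  "Emat i j = (\<chi> a b. if a = idx i \<and> b = idx j then 1 else 0)"

definition so5 :: "(real^5^5) set" where
  "so5 = {A. transpose A = - A}"

definition brk :: "real^5^5 \<Rightarrow> real^5^5 \<Rightarrow> real^5^5" where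
  "brk A B = A ** B - B ** A"

definition ebas :: "nat \<Rightarrow> real^5^5" where
  "ebas k = (if k = 1 then Emat 1 2 - Emat 2 1
       else if k = 2 then Emat 1 3 - Emat 3 1
       else if k = 3 then Emat 1 4 - Emat 4 1
       else if k = 4 then Emat 1 5 - Emat 5 1
       else if k = 5 then Emat 2 3 - Emat 3 2
       else if k = 6 then Emat 2 4 - Emat 4 2
       else if k = 7 then Emat 2 5 - Emat 5 2
       else if k = 8 then Emat 3 4 - Emat 4 3
       else if k = 9 then Emat 3 5 - Emat 5 3
       else Emat 5 4 - Emat 4 5)"

definition edual :: "nat \<Rightarrow> real^5^5 \<Rightarrow> real" where
  "edual k X = (if k = 1 then X $ idx 1 $ idx 2
       else if k = 2 then X $ idx 1 $ idx 3
       else if k = 3 then X $ idx 1 $ idx 4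
       else if k = 4 then X $ idx 1 $ idx 5
       else if k = 5 then X $ idx 2 $ idx 3
       else if k = 6 then X $ idx 2 $ idx 4
       else if k = 7 then X $ idx 2 $ idx 5
       else if k = 8 then X $ idx 3 $ idx 4
       else if k = 9 then X $ idx 3 $ idx 5
       else X $ idx 5 $ idx 4)"

definition hh :: "(real^5^5) set" where
  "hh = span {ebas 8, ebas 9, ebas 10}"

definition mm :: "(real^5^5) set" where
  "mm = span (ebas ` {1..7})"

text \<open>SO(3) inside SO(5): rotations fixing the first two coordinate axes
  (i.e. acting on coordinates 3,4,5), whose Lie algebra is span{e8,e9,e10}.\<close>
definition SO3 :: "(real^5^5) set" where
  "SO3 = {h. orthogonal_matrix h \<and> det h = 1 \<and>
              h *v axis (idx 1) 1 = axis (idx 1) 1 \<and> h *v axis (idx 2) 1 = axis (idx 2) 1}"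

definition Ad :: "real^5^5 \<Rightarrow> real^5^5 \<Rightarrow> real^5^5" where
  "Ad h X = h ** X ** matrix_inv h"

text \<open>u(1) is identified with the reals (generator u = 1); it is abelian.\<close>
definition u1_brk :: "real \<Rightarrow> real \<Rightarrow> real" where
  "u1_brk a b = 0"

definition linear_on_so5 :: "(real^5^5 \<Rightarrow> real) \<Rightarrow> bool" where
  "linear_on_so5 \<alpha> \<longleftrightarrow>
     (\<forall>X\<in>so5. \<forall>Y\<in>so5. \<alpha> (X + Y) = \<alpha> X + \<alpha> Y) \<and>
     (\<forall>c. \<forall>X\<in>so5. \<alpha> (c *\<^sub>R X) = c * \<alpha> X)"

text \<open>Wang-type data of an SO(5)-invariant connection on SO(5) \<times>_\<phi> U(1) for
  the trivial homomorphism \<phi> : SO(3) \<rightarrow> U(1): \<phi>_* = 0 and Ad(\<phi>(h)) = id.\<close>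
definition inv_conn :: "(real^5^5 \<Rightarrow> real) \<Rightarrow> bool" where
  "inv_conn \<alpha> \<longleftrightarrow>
     (\<forall>X\<in>hh. \<alpha> X = 0) \<and>
     (\<forall>h\<in>SO3. \<forall>X\<in>so5. \<alpha> (Ad h X) = \<alpha> X)"

definition curv :: "(real^5^5 \<Rightarrow> real) \<Rightarrow> real^5^5 \<Rightarrow> real^5^5 \<Rightarrow> real" where
  "curv \<alpha> X Y = u1_brk (\<alpha> X) (\<alpha> Y) - \<alpha> (brk X Y)"

definition wedge :: "nat \<Rightarrow> nat \<Rightarrow> real^5^5 \<Rightarrow> real^5^5 \<Rightarrow> real" where
  "wedge i j X Y = edual i X * edual j Y - edual j X * edual i Y"

definition omega :: "real^5^5 \<Rightarrow> real^5^5 \<Rightarrow> real" where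
  "omega X Y = wedge 2 5 X Y + wedge 3 6 X Y + wedge 4 7 X Y"

end

theory Submission
  imports Defs
begin


lemma exhaust_5:
  fixes x :: 5
  shows "x = 0 \<or> x = 1 \<or> x = 2 \<or> x = 3 \<or> x = 4"
proof (induct x)
  case (of_int z)
  then have "z = 0 \<or> z = 1 \<or> z = 2 \<or> z = 3 \<or> z = 4" by fastforce
  then show ?case by auto
qed

lemma forall_5: "(\<forall>i::5. P i) \<longleftrightarrow> P 0 \<and> P 1 \<and> P 2 \<and> P 3 \<and> P 4"
  by (metis exhaust_5)

lemma UNIV_5: "(UNIV::5 set) = {0,1,2,3,4}"
  using exhaust_5 by auto

lemma sum5: "(\<Sum>k\<in>UNIV. f k) = f 0 + f 1 + f 2 + f 3 + (f (4::5) :: real)"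
  unfolding UNIV_5 by (simp add: add.assoc)

lemma idx_simps[simp]: "idx (Suc 0) = 0" "idx 1 = 0" "idx 2 = 1" "idx 3 = 2" "idx 4 = 3" "idx 5 = 4"
  by (simp_all add: idx_def)

lemma Emat_nth[simp]: "Emat i j $ a $ b = (if a = idx i \<and> b = idx j then 1 else 0)"
  by (simp add: Emat_def)

lemma so5_iff: "X \<in> so5 \<longleftrightarrow> (\<forall>i j. X $ j $ i = - X $ i $ j)"
  by (auto simp: so5_def vec_eq_iff transpose_def)

lemma subspace_so5: "subspace so5"
  unfolding subspace_def
proof (intro conjI ballI allI)
  show "0 \<in> so5" by (simp add: so5_iff)
next
  fix x y assume xy: "x \<in> so5" "y \<in> so5"
  have hx: "x $ j $ i = - x $ i $ j" for i j using xy(1) unfolding so5_iff by blast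
  have hy: "y $ j $ i = - y $ i $ j" for i j using xy(2) unfolding so5_iff by blast
  show "x + y \<in> so5" unfolding so5_iff
  proof (intro allI)
    fix i j show "(x + y) $ j $ i = - (x + y) $ i $ j" using hx[of j i] hy[of j i] by simp
  qed
next
  fix c x assume "x \<in> so5"
  then have hx: "x $ j $ i = - x $ i $ j" for i j
    unfolding so5_iff by blast
  show "c *\<^sub>R x \<in> so5" unfolding so5_iff
  proof (intro allI)
    fix i j show "(c *\<^sub>R x) $ j $ i = - (c *\<^sub>R x) $ i $ j" using hx[of j i] by simp
  qed
qed

lemma skew_if: "(if b = p \<and> a = q then 1 else 0) - (if b = q \<and> a = p then 1 else 0) = - ((if a = p \<and> b = q then 1 else 0) - (if a = q \<and> b = p then (1::real) else 0))"
  by (cases "a = p"; cases "b = q"; cases "a = q"; cases "b = p") simp_all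

lemma skewE: "Emat i j - Emat j i \<in> so5"
  unfolding so5_iff
proof (intro allI)
  fix a b
  show "(Emat i j - Emat j i) $ b $ a = - (Emat i j - Emat j i) $ a $ b"
    by (simp only: vector_minus_component Emat_nth) (rule skew_if)
qed

lemma ebas_so5: "ebas k \<in> so5"
  unfolding ebas_def by (simp add: skewE)

lemma so5_entries:
  assumes "X \<in> so5"
  shows "X$0$0 = 0" "X$1$1 = 0" "X$2$2 = 0" "X$3$3 = 0" "X$4$4 = 0"
    "X$1$0 = - X$0$1" "X$2$0 = - X$0$2" "X$3$0 = - X$0$3" "X$4$0 = - X$0$4"
    "X$2$1 = - X$1$2" "X$3$1 = - X$1$3" "X$4$1 = - X$1$4"
    "X$3$2 = - X$2$3" "X$4$2 = - X$2$4" "X$4$3 = - X$3$4"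
proof -
  have H: "X $ j $ i = - X $ i $ j" for i j using assms unfolding so5_iff by blast
  show "X$0$0 = 0" using H[of 0 0] by simp
  show "X$1$1 = 0" using H[of 1 1] by simp
  show "X$2$2 = 0" using H[of 2 2] by simp
  show "X$3$3 = 0" using H[of 3 3] by simp
  show "X$4$4 = 0" using H[of 4 4] by simp
  show "X$1$0 = - X$0$1" by (rule H)
  show "X$2$0 = - X$0$2" by (rule H)
  show "X$3$0 = - X$0$3" by (rule H)
  show "X$4$0 = - X$0$4" by (rule H)
  show "X$2$1 = - X$1$2" by (rule H)
  show "X$3$1 = - X$1$3" by (rule H)
  show "X$4$1 = - X$1$4" by (rule H)
  show "X$3$2 = - X$2$3" by (rule H)
  show "X$4$2 = - X$2$4" by (rule H)
  show "X$4$3 = - X$3$4" by (rule H)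
qed

lemma ebas_simps: "ebas 1 = Emat 1 2 - Emat 2 1" "ebas 2 = Emat 1 3 - Emat 3 1"
  "ebas 3 = Emat 1 4 - Emat 4 1" "ebas 4 = Emat 1 5 - Emat 5 1" "ebas 5 = Emat 2 3 - Emat 3 2"
  "ebas 6 = Emat 2 4 - Emat 4 2" "ebas 7 = Emat 2 5 - Emat 5 2" "ebas 8 = Emat 3 4 - Emat 4 3"
  "ebas 9 = Emat 3 5 - Emat 5 3" "ebas 10 = Emat 5 4 - Emat 4 5"
  by (simp_all add: ebas_def)

lemma edual_simps: "edual 1 X = X$0$1" "edual 2 X = X$0$2" "edual 3 X = X$0$3" "edual 4 X = X$0$4"
  "edual 5 X = X$1$2" "edual 6 X = X$1$3" "edual 7 X = X$1$4" "edual 8 X = X$2$3"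
  "edual 9 X = X$2$4" "edual 10 X = X$4$3"
  by (simp_all add: edual_def)

lemma ebas1: "ebas (Suc 0) = Emat 1 2 - Emat 2 1" by (simp add: ebas_def)
lemma edual1: "edual (Suc 0) X = X$0$1" by (simp add: edual_def)

lemma ten: "{1..10::nat} = {1,2,3,4,5,6,7,8,9,10}"
  by (simp add: atLeastAtMost_upt upt_rec numeral_eq_Suc)

lemma decomp_explicit:
  assumes "X \<in> so5"
  shows "X = X$0$1 *\<^sub>R ebas 1 + X$0$2 *\<^sub>R ebas 2 + X$0$3 *\<^sub>R ebas 3 + X$0$4 *\<^sub>R ebas 4
     + X$1$2 *\<^sub>R ebas 5 + X$1$3 *\<^sub>R ebas 6 + X$1$4 *\<^sub>R ebas 7 + X$2$3 *\<^sub>R ebas 8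
     + X$2$4 *\<^sub>R ebas 9 + X$4$3 *\<^sub>R ebas 10"
proof -
  note E = so5_entries[OF assms]
  have ent: "X $ a $ b = (X$0$1 *\<^sub>R ebas 1 + X$0$2 *\<^sub>R ebas 2 + X$0$3 *\<^sub>R ebas 3 + X$0$4 *\<^sub>R ebas 4
     + X$1$2 *\<^sub>R ebas 5 + X$1$3 *\<^sub>R ebas 6 + X$1$4 *\<^sub>R ebas 7 + X$2$3 *\<^sub>R ebas 8
     + X$2$4 *\<^sub>R ebas 9 + X$4$3 *\<^sub>R ebas 10) $ a $ b" for a b
    unfolding ebas_simps using exhaust_5[of a] exhaust_5[of b]
    by (elim disjE; simp add: E)
  show ?thesis unfolding vec_eq_iff by (intro allI) (rule ent)
qed

lemma decomp:
  assumes "X \<in> so5"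
  shows "X = (\<Sum>k\<in>{1..10}. edual k X *\<^sub>R ebas k)"
  apply (subst decomp_explicit[OF assms])
  unfolding ten by (simp add: edual_simps edual1 add.assoc)



lemma lin_zero: "linear_on_so5 \<alpha> \<Longrightarrow> \<alpha> 0 = 0"
  unfolding linear_on_so5_def
  by (metis mult_zero_left scale_zero_left subspace_0 subspace_so5)

lemma lin_neg: "linear_on_so5 \<alpha> \<Longrightarrow> X \<in> so5 \<Longrightarrow> \<alpha> (- X) = - \<alpha> X"
  unfolding linear_on_so5_def
  by (metis mult_minus1 scaleR_minus1_left)

lemma lin_sum:
  assumes "linear_on_so5 \<alpha>" "finite K" "\<forall>k\<in>K. f k \<in> so5"
  shows "\<alpha> (\<Sum>k\<in>K. c k *\<^sub>R f k) = (\<Sum>k\<in>K. c k * \<alpha> (f k))"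
  using assms(2,3)
proof (induction K rule: finite_induct)
  case empty
  then show ?case using lin_zero[OF assms(1)] by simp
next
  case (insert x F)
  have s1: "c x *\<^sub>R f x \<in> so5" using insert subspace_so5 by (simp add: subspace_scale)
  have s2: "(\<Sum>k\<in>F. c k *\<^sub>R f k) \<in> so5" using insert subspace_so5
    by (intro subspace_sum subspace_scale) auto
  have "\<alpha> (\<Sum>k\<in>insert x F. c k *\<^sub>R f k) = \<alpha> (c x *\<^sub>R f x) + \<alpha> (\<Sum>k\<in>F. c k *\<^sub>R f k)"
    using insert s1 s2 assms(1) unfolding linear_on_so5_def by simp
  then show ?case using insert assms(1) unfolding linear_on_so5_def by simp
qed

definition dg :: "(5 \<Rightarrow> real) \<Rightarrow> real^5^5" where
  "dg f = (\<chi> i j. if i = j then f i else 0)"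

lemma ifm1: "(if P then a else 0) * (b::real) = (if P then a * b else 0)" by simp
lemma ifm2: "(b::real) * (if P then a else 0) = (if P then b * a else 0)" by simp

lemma dg_left: "(dg f ** X) $ i $ j = f i * X $ i $ j"
  by (simp add: dg_def matrix_matrix_mult_def ifm1 sum.delta)

lemma dg_right: "(X ** dg f) $ i $ j = X $ i $ j * f j"
  by (simp add: dg_def matrix_matrix_mult_def ifm2 sum.delta')

lemma dg_mul: "(dg f ** X ** dg g) $ i $ j = f i * X $ i $ j * g j"
  by (simp add: dg_left dg_right)

lemma dg_dg: "dg f ** dg g = dg (\<lambda>i. f i * g i)"
  by (simp add: vec_eq_iff dg_left) (simp add: dg_def)

lemma transpose_dg: "transpose (dg f) = dg f"
  by (simp add: dg_def transpose_def vec_eq_iff)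

lemma mat1_dg: "mat 1 = dg (\<lambda>i. 1)"
  by (simp add: dg_def mat_def vec_eq_iff)

lemma matrix_inv_eq:
  fixes A B :: "real^'n^'n"
  assumes "A ** B = mat 1" "B ** A = mat 1"
  shows "matrix_inv A = B"
proof -
  have ex: "A ** matrix_inv A = mat 1 \<and> matrix_inv A ** A = mat 1"
    unfolding matrix_inv_def by (rule someI[of _ B]) (use assms in auto)
  have "matrix_inv A = matrix_inv A ** (A ** B)" using assms by simp
  also have "\<dots> = (matrix_inv A ** A) ** B" by (simp add: matrix_mul_assoc)
  also have "\<dots> = B" using ex by simp
  finally show ?thesis .
qed

definition sg :: "5 \<Rightarrow> 5 \<Rightarrow> 5 \<Rightarrow> real" where
  "sg p q i = (if i = p \<or> i = q then -1 else 1)"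

lemma sg_sq: "sg p q i * sg p q i = 1" by (simp add: sg_def)

lemma dg_vec: "(dg f *v v) $ i = f i * v $ i"
  by (simp add: matrix_vector_mult_def dg_def ifm1 sum.delta)

lemma dg_axis: "f k = 1 \<Longrightarrow> dg f *v axis k 1 = axis k 1"
  unfolding vec_eq_iff dg_vec by (simp add: axis_def)

lemma det_dg: "det (dg f) = prod f UNIV"
proof -
  have "det (dg f) = prod (\<lambda>i. dg f $ i $ i) UNIV" by (rule det_diagonal) (simp add: dg_def)
  then show ?thesis by (simp add: dg_def)
qed

lemma prod_sg23: "prod (sg 2 3) UNIV = 1"
  unfolding UNIV_5 by (simp add: sg_def)

lemma prod_sg34: "prod (sg 3 4) UNIV = 1"
  unfolding UNIV_5 by (simp add: sg_def)

lemma dg_sg_SO3: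
  assumes "sg p q 0 = 1" "sg p q 1 = 1" "det (dg (sg p q)) = 1"
  shows "dg (sg p q) \<in> SO3"
proof -
  have sq: "dg (sg p q) ** dg (sg p q) = mat 1"
    by (simp add: dg_dg sg_sq mat1_dg)
  have "orthogonal_matrix (dg (sg p q))"
    unfolding orthogonal_matrix_def transpose_dg using sq by simp
  then show ?thesis unfolding SO3_def using assms dg_axis by simp
qed

lemma Ad_dg: "Ad (dg (sg p q)) X = dg (sg p q) ** X ** dg (sg p q)"
proof -
  have sq: "dg (sg p q) ** dg (sg p q) = mat 1"
    by (simp add: dg_dg sg_sq mat1_dg)
  show ?thesis unfolding Ad_def using matrix_inv_eq[OF sq sq] by simp
qed



lemma neg_ebas:
  "Ad (dg (sg 2 3)) (ebas 2) = - ebas 2" "Ad (dg (sg 2 3)) (ebas 3) = - ebas 3"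
  "Ad (dg (sg 2 3)) (ebas 5) = - ebas 5" "Ad (dg (sg 2 3)) (ebas 6) = - ebas 6"
  "Ad (dg (sg 3 4)) (ebas 4) = - ebas 4" "Ad (dg (sg 3 4)) (ebas 7) = - ebas 7"
  by (simp_all add: vec_eq_iff Ad_dg dg_mul forall_5 sg_def ebas_simps)

lemma SO3_23: "dg (sg 2 3) \<in> SO3"
  by (rule dg_sg_SO3) (simp add: sg_def, simp add: sg_def, simp only: det_dg prod_sg23)
lemma SO3_34: "dg (sg 3 4) \<in> SO3"
  by (rule dg_sg_SO3) (simp add: sg_def, simp add: sg_def, simp only: det_dg prod_sg34)

lemma mm_so5: "mm \<subseteq> so5"
  unfolding mm_def by (rule span_minimal) (auto simp: ebas_so5 subspace_so5)

lemma sub01': "subspace {X::real^5^5. X $ 0 $ 1 = 0}"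
  unfolding subspace_def by simp

lemma sub01: "subspace {X. X \<in> so5 \<and> X $ 0 $ 1 = 0}"
proof -
  have "{X. X \<in> so5 \<and> X $ 0 $ 1 = 0} = so5 \<inter> {X::real^5^5. X $ 0 $ 1 = 0}" by auto
  then show ?thesis using subspace_inter[OF subspace_so5 sub01'] by simp
qed

lemma hh_sub: "hh \<subseteq> {X. X \<in> so5 \<and> X $ 0 $ 1 = 0}"
  unfolding hh_def by (rule span_minimal[OF _ sub01]) (auto simp: ebas_so5 ebas_simps skewE)

lemma row_of_transpose: "(transpose h *v axis k 1) $ i = (h::real^5^5) $ k $ i"
  by (simp add: matrix_vector_mult_def axis_def transpose_def ifm2 sum.delta sum.delta')

lemma SO3_rows:
  assumes "h \<in> SO3" "k = 0 \<or> k = 1"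
  shows "h $ k $ i = (if i = k then 1 else 0)"
proof -
  have o: "transpose h ** h = mat 1" using assms(1) unfolding SO3_def orthogonal_matrix_def by auto
  have ax: "h *v axis k 1 = axis k 1" using assms unfolding SO3_def by auto
  have "transpose h *v axis k 1 = transpose h *v (h *v axis k 1)" using ax by simp
  also have "\<dots> = axis k 1" by (simp add: matrix_vector_mul_assoc o)
  finally have "(transpose h *v axis k 1) $ i = axis k 1 $ i" by simp
  then have "h $ k $ i = axis k 1 $ i" unfolding row_of_transpose .
  then show ?thesis by (simp add: axis_def)
qed

lemma SO3_inv: "h \<in> SO3 \<Longrightarrow> matrix_inv h = transpose h"
  by (rule matrix_inv_eq) (auto simp: SO3_def orthogonal_matrix_def)

lemma Ad_01:
  assumes "h \<in> SO3"
  shows "Ad h X $ 0 $ 1 = X $ 0 $ 1"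
proof -
  have r0: "h $ 0 $ i = (if i = 0 then 1 else 0)" for i using SO3_rows[OF assms] by simp
  have r1: "h $ 1 $ i = (if i = 1 then 1 else 0)" for i using SO3_rows[OF assms] by simp
  have "(h ** X) $ 0 $ k = X $ 0 $ k" for k
    by (simp add: matrix_matrix_mult_def r0 ifm1 sum.delta)
  then show ?thesis
    unfolding Ad_def SO3_inv[OF assms]
    by (simp add: matrix_matrix_mult_def transpose_def r1 ifm2 sum.delta')
qed

lemma transpose_neg: "transpose (- A) = - transpose (A::real^'n^'n)"
  by (simp add: transpose_def vec_eq_iff)

lemma mul_neg: "A ** (- B) = - (A ** (B::real^'n^'n))"
  by (simp add: matrix_matrix_mult_def vec_eq_iff sum_negf)

lemma neg_mul: "(- A) ** B = - (A ** (B::real^'n^'n))"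
  by (simp add: matrix_matrix_mult_def vec_eq_iff sum_negf)

lemma Ad_so5:
  assumes "h \<in> SO3" "X \<in> so5"
  shows "Ad h X \<in> so5"
proof -
  have tX: "transpose X = - X" using assms(2) by (simp add: so5_def)
  show ?thesis
    unfolding Ad_def SO3_inv[OF assms(1)] so5_def
    by (simp add: matrix_transpose_mul tX matrix_mul_assoc mul_neg neg_mul)
qed

lemma transpose_diff: "transpose (A - B) = transpose A - transpose (B::real^'n^'n)"
  by (simp add: transpose_def vec_eq_iff)

lemma brk_so5:
  assumes "X \<in> so5" "Y \<in> so5"
  shows "brk X Y \<in> so5"
proof -
  have tX: "transpose X = - X" using assms(1) by (simp add: so5_def)
  have tY: "transpose Y = - Y" using assms(2) by (simp add: so5_def)
  have "transpose (brk X Y) = (- Y) ** (- X) - (- X) ** (- Y)"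
    unfolding brk_def transpose_diff matrix_transpose_mul tX tY ..
  also have "\<dots> = - brk X Y" unfolding brk_def mul_neg neg_mul by simp
  finally show ?thesis unfolding so5_def by simp
qed


lemma mm01: "((A::real^5^5) ** B) $ 0 $ 1 = A$0$0*B$0$1 + A$0$1*B$1$1 + A$0$2*B$2$1 + A$0$3*B$3$1 + (A$0$4*B$4$1::real)"
  unfolding matrix_matrix_mult_def vec_lambda_beta sum5 ..

lemma brk_01:
  assumes "X \<in> so5" "Y \<in> so5"
  shows "brk X Y $ 0 $ 1 = - omega X Y"
proof -
  note EX = so5_entries[OF assms(1)] and EY = so5_entries[OF assms(2)]
  have "brk X Y $ 0 $ 1 = X$0$0*Y$0$1 + X$0$1*Y$1$1 + X$0$2*Y$2$1 + X$0$3*Y$3$1 + X$0$4*Y$4$1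
     - (Y$0$0*X$0$1 + Y$0$1*X$1$1 + Y$0$2*X$2$1 + Y$0$3*X$3$1 + Y$0$4*X$4$1)"
    unfolding brk_def vector_minus_component mm01 ..
  also have "\<dots> = - (X$0$2*Y$1$2 - X$1$2*Y$0$2 + (X$0$3*Y$1$3 - X$1$3*Y$0$3) + (X$0$4*Y$1$4 - X$1$4*Y$0$4))"
    unfolding EX EY by (simp add: algebra_simps)
  also have "\<dots> = - omega X Y"
    unfolding omega_def wedge_def edual_simps ..
  finally show ?thesis .
qed


lemma forward:
  assumes lin: "linear_on_so5 \<alpha>" and ic: "inv_conn \<alpha>"
  shows "\<forall>X\<in>so5. \<alpha> X = \<alpha> (ebas 1) * edual 1 X"
proof
  fix X assume X: "X \<in> so5"
  have hz: "\<alpha> X = 0" if "X \<in> hh" for X using ic that unfolding inv_conn_def by auto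
  have inv: "\<alpha> (Ad h X) = \<alpha> X" if "h \<in> SO3" "X \<in> so5" for h X
    using ic that unfolding inv_conn_def by auto
  have z: "\<alpha> (ebas k) = 0" if "Ad h (ebas k) = - ebas k" "h \<in> SO3" for h k
    using inv[OF that(2) ebas_so5[of k]] lin_neg[OF lin ebas_so5[of k]] that(1) by simp
  have e8: "\<alpha> (ebas 8) = 0" "\<alpha> (ebas 9) = 0" "\<alpha> (ebas 10) = 0"
    by (auto intro!: hz simp: hh_def span_base)
  note zs = z[OF neg_ebas(1) SO3_23] z[OF neg_ebas(2) SO3_23] z[OF neg_ebas(3) SO3_23]
    z[OF neg_ebas(4) SO3_23] z[OF neg_ebas(5) SO3_34] z[OF neg_ebas(6) SO3_34]
  have "\<alpha> X = \<alpha> (\<Sum>k\<in>{1..10}. edual k X *\<^sub>R ebas k)" using decomp[OF X] by simp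
  also have "\<dots> = (\<Sum>k\<in>{1..10}. edual k X * \<alpha> (ebas k))"
    by (rule lin_sum[OF lin]) (auto simp: ebas_so5)
  also have "\<dots> = \<alpha> (ebas 1) * edual 1 X"
    unfolding ten using zs e8 by simp
  finally show "\<alpha> X = \<alpha> (ebas 1) * edual 1 X" .
qed

lemma backward:
  assumes a: "\<forall>X\<in>so5. \<alpha> X = a1 * edual 1 X"
  shows "inv_conn \<alpha>"
  unfolding inv_conn_def
proof safe
  fix X assume "X \<in> hh"
  then have "X \<in> so5" "X $ 0 $ 1 = 0" using hh_sub by auto
  then show "\<alpha> X = 0" using a by (simp add: edual_simps edual1)
next
  fix h X assume h: "h \<in> SO3" and X: "X \<in> so5"
  show "\<alpha> (Ad h X) = \<alpha> X" using a Ad_so5[OF h X] X Ad_01[OF h] by (simp add: edual_simps edual1)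
qed

theorem lemma4p5:
  fixes \<alpha> :: "real^5^5 \<Rightarrow> real"
  assumes "linear_on_so5 \<alpha>"
  shows "(inv_conn \<alpha> \<longleftrightarrow> (\<exists>a1::real. \<forall>X\<in>so5. \<alpha> X = a1 * edual 1 X))
       \<and> (inv_conn \<alpha> \<longrightarrow> (\<exists>f::real. \<forall>X\<in>mm. \<forall>Y\<in>mm. curv \<alpha> X Y = f * omega X Y))"
proof (intro conjI impI iffI)
  assume "inv_conn \<alpha>"
  then show "\<exists>a1::real. \<forall>X\<in>so5. \<alpha> X = a1 * edual 1 X" using forward[OF assms] by blast
next
  assume "\<exists>a1::real. \<forall>X\<in>so5. \<alpha> X = a1 * edual 1 X"
  then show "inv_conn \<alpha>" using backward by blast
next
  assume "inv_conn \<alpha>"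
  then have a: "\<forall>X\<in>so5. \<alpha> X = \<alpha> (ebas 1) * edual 1 X" using forward[OF assms] by blast
  show "\<exists>f::real. \<forall>X\<in>mm. \<forall>Y\<in>mm. curv \<alpha> X Y = f * omega X Y"
  proof (intro exI ballI)
    fix X Y assume "X \<in> mm" "Y \<in> mm"
    then have X: "X \<in> so5" and Y: "Y \<in> so5" using mm_so5 by auto
    show "curv \<alpha> X Y = \<alpha> (ebas 1) * omega X Y"
      unfolding curv_def u1_brk_def using a brk_so5[OF X Y] brk_01[OF X Y]
      by (simp add: edual_simps edual1)
  qed
qed

end
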